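(* Let $\mathbb T=(V,E,o)$ be a locally finite rooted tree (edges directed away from the root) with rates satisfying a flow rule for a flow of strength $q>0$, and assume that particles are generated at the root at rate $\lambda=\rho q$ for some $\rho\in(0,1)$. Then the Bernoulli-$\rho$ product measure $\nu_\rho$ on $\{0,1\}^V$ is an invariant measure for the TASEP $(\eta_t)_{t\ge0}$ on $\mathbb T$, i.e. $\int\mathcal Lf\,d\nu_\rho=0$ for all cylinder functions $f$.
   Context: The TASEP on $\mathbb T$ with rates $(r_{x,y})_{(x,y)\in E}$ (positive, uniformly bounded above) and reservoir intensity $\lambda$ has generator $\mathcal Lf(\eta)=\lambda(1-\eta(o))[f(\eta^o)-f(\eta)]+\sum_{(x,y)\in E}r_{x,y}\eta(x)(1-\eta(y))[f(\eta^{x,y})-f(\eta)]$, where $\eta^{x,y}$ swaps the values at $x,y$ and $\eta^o$ flips the value at $o$. $r_x:=\sum_{y:(x,y)\in E}r_{x,y}$; $\bar x$ is the parent of $x\ne o$. Flow rule of strength $q$: $r_x-r_{\bar x,x}=0$ for all $x\ne o$ and $r_o=q$. *)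

theory Defs
  imports "HOL-Probability.Probability"
begin

definition locally_finite_rooted_tree :: "('v \<times> 'v) set \<Rightarrow> 'v \<Rightarrow> bool" where
  "locally_finite_rooted_tree E rt \<longleftrightarrow>
     (\<forall>x. (x, rt) \<notin> E) \<and>
     (\<forall>y. y \<noteq> rt \<longrightarrow> (\<exists>!x. (x, y) \<in> E)) \<and>
     (\<forall>x. (rt, x) \<in> E\<^sup>*) \<and>
     (\<forall>x. finite {y. (x, y) \<in> E})"

definition out_rate :: "('v \<times> 'v) set \<Rightarrow> ('v \<Rightarrow> 'v \<Rightarrow> real) \<Rightarrow> 'v \<Rightarrow> real" where
  "out_rate E r x = (\<Sum>y\<in>{y. (x, y) \<in> E}. r x y)"

definition flow_rule :: "('v \<times> 'v) set \<Rightarrow> 'v \<Rightarrow> ('v \<Rightarrow> 'v \<Rightarrow> real) \<Rightarrow> real \<Rightarrow> bool" where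
  "flow_rule E rt r q \<longleftrightarrow>
     (\<forall>x y. (x, y) \<in> E \<longrightarrow> out_rate E r y - r x y = 0) \<and> out_rate E r rt = q"

text \<open>Configurations: 'v \<Rightarrow> bool (True = occupied).\<close>
definition swap_conf :: "('v \<Rightarrow> bool) \<Rightarrow> 'v \<Rightarrow> 'v \<Rightarrow> ('v \<Rightarrow> bool)" where
  "swap_conf \<eta> x y = \<eta>(x := \<eta> y, y := \<eta> x)"

definition flip_conf :: "('v \<Rightarrow> bool) \<Rightarrow> 'v \<Rightarrow> ('v \<Rightarrow> bool)" where
  "flip_conf \<eta> x = \<eta>(x := \<not> \<eta> x)"

definition cylinder_fun :: "(('v \<Rightarrow> bool) \<Rightarrow> real) \<Rightarrow> bool" where
  "cylinder_fun f \<longleftrightarrow> (\<exists>S. finite S \<and>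
      (\<forall>\<eta> \<zeta>. (\<forall>x\<in>S. \<eta> x = \<zeta> x) \<longrightarrow> f \<eta> = f \<zeta>))"

text \<open>Generator of the TASEP with reservoir intensity lam at the root.
The edge sum is an (unconditional) infinite sum over E; for cylinder f only
finitely many terms are nonzero.\<close>
definition tasep_gen ::
  "('v \<times> 'v) set \<Rightarrow> 'v \<Rightarrow> ('v \<Rightarrow> 'v \<Rightarrow> real) \<Rightarrow> real \<Rightarrow>
   (('v \<Rightarrow> bool) \<Rightarrow> real) \<Rightarrow> ('v \<Rightarrow> bool) \<Rightarrow> real" where
  "tasep_gen E rt r lam f \<eta> =
     lam * (1 - of_bool (\<eta> rt)) * (f (flip_conf \<eta> rt) - f \<eta>) +
     (\<Sum>\<^sub>\<infinity>(x, y)\<in>E. r x y * of_bool (\<eta> x) * (1 - of_bool (\<eta> y)) *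
                      (f (swap_conf \<eta> x y) - f \<eta>))"

definition bernoulli_product :: "real \<Rightarrow> ('v \<Rightarrow> bool) measure" where
  "bernoulli_product \<rho> = (\<Pi>\<^sub>M x\<in>UNIV. measure_pmf (bernoulli_pmf \<rho>))"

end

theory Submission
  imports Defs
begin

definition dep :: "'v set \<Rightarrow> (('v \<Rightarrow> bool) \<Rightarrow> real) \<Rightarrow> bool" where
  "dep S g \<longleftrightarrow> (\<forall>\<eta> \<zeta>. (\<forall>x\<in>S. \<eta> x = \<zeta> x) \<longrightarrow> g \<eta> = g \<zeta>)"

abbreviation "BM \<rho> \<equiv> measure_pmf (bernoulli_pmf \<rho>)"

lemma dep_upd: "dep S g \<Longrightarrow> dep S (\<lambda>\<eta>. g (\<eta>(v := b)))"
proof (unfold dep_def, intro allI impI)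
  fix \<eta> \<zeta> :: "'a \<Rightarrow> bool"
  assume g: "\<forall>\<eta> \<zeta>. (\<forall>x\<in>S. \<eta> x = \<zeta> x) \<longrightarrow> g \<eta> = g \<zeta>" and h: "\<forall>x\<in>S. \<eta> x = \<zeta> x"
  have "\<forall>x\<in>S. (\<eta>(v := b)) x = (\<zeta>(v := b)) x" using h by simp
  then show "g (\<eta>(v := b)) = g (\<zeta>(v := b))" using g by blast
qed

lemma space_bp[simp]: "space (bernoulli_product \<rho>) = UNIV"
  by (simp add: bernoulli_product_def space_PiM)

lemma prob_bp: "prob_space (bernoulli_product \<rho>)"
  unfolding bernoulli_product_def by (intro prob_space_PiM) (simp add: prob_space_measure_pmf)

lemma dep_measurable:
  fixes S :: "'v set"
  assumes "finite S" "dep S g"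
  shows "g \<in> borel_measurable (bernoulli_product \<rho>)"
proof -
  define A where "A = {a::'v\<Rightarrow>bool. \<forall>x. x \<notin> S \<longrightarrow> \<not> a x}"
  define \<phi> where "\<phi> \<eta> = (\<lambda>x. if x \<in> S then \<eta> x else False)" for \<eta> :: "'v \<Rightarrow> bool"
  have fA: "finite A"
  proof (rule finite_subset)
    show "A \<subseteq> (\<lambda>T x. x \<in> T) ` Pow S"
    proof
      fix a assume "a \<in> A" then show "a \<in> (\<lambda>T x. x \<in> T) ` Pow S"
        by (intro image_eqI[of _ _ "{x. a x}"]) (auto simp: A_def)
    qed
  qed (use assms in auto)
  have "\<phi> \<in> measurable (bernoulli_product \<rho>) (count_space A)"
  proof (subst measurable_count_space_eq2[OF fA], intro conjI ballI)
    show "\<phi> \<in> space (bernoulli_product \<rho>) \<rightarrow> A" by (auto simp: A_def \<phi>_def)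
    fix a assume a: "a \<in> A"
    have "\<phi> -` {a} \<inter> space (bernoulli_product \<rho>) = {\<eta> \<in> space (bernoulli_product \<rho>). \<forall>x\<in>S. \<eta> x = a x}"
      using a by (auto simp: A_def \<phi>_def fun_eq_iff)
    also have "\<dots> \<in> sets (bernoulli_product \<rho>)"
      unfolding bernoulli_product_def using assms(1) by measurable
    finally show "\<phi> -` {a} \<inter> space (bernoulli_product \<rho>) \<in> sets (bernoulli_product \<rho>)" .
  qed
  moreover have "g \<in> borel_measurable (count_space A)" by simp
  ultimately have "g \<circ> \<phi> \<in> borel_measurable (bernoulli_product \<rho>)" by (rule measurable_comp)
  moreover have "g \<circ> \<phi> = g" using assms(2) by (auto simp: dep_def \<phi>_def fun_eq_iff)
  ultimately show ?thesis by simp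
qed

lemma dep_bounded:
  fixes S :: "'v set"
  assumes "finite S" "dep S g"
  shows "\<exists>B. \<forall>\<eta>. \<bar>g \<eta>\<bar> \<le> B"
proof -
  define A where "A = {a::'v\<Rightarrow>bool. \<forall>x. x \<notin> S \<longrightarrow> \<not> a x}"
  have fA: "finite A"
  proof (rule finite_subset)
    show "A \<subseteq> (\<lambda>T x. x \<in> T) ` Pow S"
    proof
      fix a assume "a \<in> A" then show "a \<in> (\<lambda>T x. x \<in> T) ` Pow S"
        by (intro image_eqI[of _ _ "{x. a x}"]) (auto simp: A_def)
    qed
  qed (use assms in auto)
  show ?thesis
  proof (intro exI allI)
    fix \<eta>
    have "g \<eta> = g (\<lambda>x. if x \<in> S then \<eta> x else False)" using assms(2) by (auto simp: dep_def)
    moreover have "(\<lambda>x. if x \<in> S then \<eta> x else False) \<in> A" by (auto simp: A_def)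
    ultimately show "\<bar>g \<eta>\<bar> \<le> Max ((\<lambda>a. \<bar>g a\<bar>) ` A)"
      using fA by (metis (no_types, lifting) Max_ge finite_imageI image_eqI)
  qed
qed

lemma dep_integrable:
  fixes S :: "'v set"
  assumes "finite S" "dep S g"
  shows "integrable (bernoulli_product \<rho>) g"
proof -
  interpret prob_space "bernoulli_product \<rho>" by (rule prob_bp)
  obtain B where B: "\<And>\<eta>. \<bar>g \<eta>\<bar> \<le> B" using dep_bounded[OF assms] by blast
  show ?thesis
    by (rule integrable_const_bound[where B=B]) (use B dep_measurable[OF assms] in auto)
qed

lemma split_L:
  fixes S :: "'v set"
  assumes "finite S" "dep S g" "0 \<le> \<rho>" "\<rho> \<le> 1"
  shows "integral\<^sup>L (bernoulli_product \<rho>) g =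
    \<rho> * integral\<^sup>L (bernoulli_product \<rho>) (\<lambda>\<eta>. g (\<eta>(v := True))) +
    (1 - \<rho>) * integral\<^sup>L (bernoulli_product \<rho>) (\<lambda>\<eta>. g (\<eta>(v := False)))"
proof -
  let ?\<nu> = "bernoulli_product \<rho>"
  interpret P: prob_space ?\<nu> by (rule prob_bp)
  interpret BMp: prob_space "BM \<rho>" by (rule prob_space_measure_pmf)
  interpret PS: pair_prob_space "BM \<rho>" ?\<nu> ..
  have D: "distr (BM \<rho> \<Otimes>\<^sub>M ?\<nu>) ?\<nu> (\<lambda>(b, X). X(v := b)) = ?\<nu>"
    using distr_pair_PiM_eq_PiM[of UNIV "\<lambda>_. BM \<rho>" v, OF prob_space_measure_pmf prob_space_measure_pmf]
    unfolding bernoulli_product_def insert_UNIV .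
  have m: "(\<lambda>(b, X). X(v := b)) \<in> measurable (BM \<rho> \<Otimes>\<^sub>M ?\<nu>) ?\<nu>"
  proof -
    have "(\<lambda>p. (snd p)(v := fst p)) \<in> measurable (BM \<rho> \<Otimes>\<^sub>M ?\<nu>) ?\<nu>"
      unfolding bernoulli_product_def
      by (rule measurable_fun_upd[where J=UNIV]) (auto simp: bernoulli_product_def)
    then show ?thesis by (simp add: case_prod_beta')
  qed
  have gm: "g \<in> borel_measurable ?\<nu>" by (rule dep_measurable[OF assms(1,2)])
  obtain B where B: "\<And>\<eta>. \<bar>g \<eta>\<bar> \<le> B" using dep_bounded[OF assms(1,2)] by blast
  have int2: "integrable (BM \<rho> \<Otimes>\<^sub>M ?\<nu>) (\<lambda>(b, X). g (X(v := b)))"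
  proof -
    have "(\<lambda>p. g ((\<lambda>(b, X). X(v := b)) p)) \<in> borel_measurable (BM \<rho> \<Otimes>\<^sub>M ?\<nu>)"
      using measurable_comp[OF m gm] by (simp add: comp_def)
    then have "(\<lambda>(b, X). g (X(v := b))) \<in> borel_measurable (BM \<rho> \<Otimes>\<^sub>M ?\<nu>)"
      by (simp add: case_prod_beta')
    then show ?thesis
      by (intro PS.integrable_const_bound[where B=B]) (auto simp: B)
  qed
  have "integral\<^sup>L ?\<nu> g = integral\<^sup>L (BM \<rho> \<Otimes>\<^sub>M ?\<nu>) (\<lambda>p. g ((\<lambda>(b, X). X(v := b)) p))"
    by (subst D[symmetric], rule integral_distr[OF m gm])
  also have "\<dots> = integral\<^sup>L (BM \<rho> \<Otimes>\<^sub>M ?\<nu>) (\<lambda>(b, X). g (X(v := b)))"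
    by (simp add: case_prod_beta')
  also have "\<dots> = (\<integral>X. (\<integral>b. g (X(v := b)) \<partial>BM \<rho>) \<partial>?\<nu>)"
    by (rule PS.integral_snd[OF int2, symmetric])
  also have "\<dots> = (\<integral>X. \<rho> * g (X(v := True)) + (1 - \<rho>) * g (X(v := False)) \<partial>?\<nu>)"
    by (intro Bochner_Integration.integral_cong refl) (simp add: assms(3,4) mult.commute)
  also have "\<dots> = \<rho> * integral\<^sup>L ?\<nu> (\<lambda>\<eta>. g (\<eta>(v := True))) +
    (1 - \<rho>) * integral\<^sup>L ?\<nu> (\<lambda>\<eta>. g (\<eta>(v := False)))"
  proof -
    have d: "dep S (\<lambda>\<eta>. g (\<eta>(v := b)))" for b
      by (rule dep_upd[OF assms(2)])
    show ?thesis
      using dep_integrable[OF assms(1) d[of True], of \<rho>] dep_integrable[OF assms(1) d[of False], of \<rho>]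
      by (simp only: Bochner_Integration.integral_add integrable_mult_right Bochner_Integration.integral_mult_right)
  qed
  finally show ?thesis .
qed

lemma comb:
  fixes E :: "('v \<times> 'v) set" and S :: "'v set" and P :: "'v \<Rightarrow> real"
  assumes tree: "locally_finite_rooted_tree E rt"
    and flow: "flow_rule E rt r q"
    and S: "finite S" and P0: "\<And>v. v \<notin> S \<Longrightarrow> P v = 0"
  shows "finite {p\<in>E. fst p \<in> S \<or> snd p \<in> S}"
    and "(\<Sum>p\<in>{p\<in>E. fst p \<in> S \<or> snd p \<in> S}. r (fst p) (snd p) * (P (snd p) - P (fst p))) = - q * P rt"
proof -
  define par where "par y = (THE x. (x, y) \<in> E)" for y
  have noroot: "(x, rt) \<notin> E" for x using tree by (auto simp: locally_finite_rooted_tree_def)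
  have uniq: "y \<noteq> rt \<Longrightarrow> \<exists>!x. (x, y) \<in> E" for y using tree by (auto simp: locally_finite_rooted_tree_def)
  have finch: "finite {y. (x, y) \<in> E}" for x using tree by (auto simp: locally_finite_rooted_tree_def)
  have par_in: "y \<noteq> rt \<Longrightarrow> (par y, y) \<in> E" for y
    unfolding par_def by (rule theI') (rule uniq)
  have par_eq: "(x, y) \<in> E \<Longrightarrow> par y = x" for x y
  proof -
    assume e: "(x, y) \<in> E"
    then have "y \<noteq> rt" using noroot by auto
    then show "par y = x" using uniq[of y] par_in[of y] e by blast
  qed
  define D1 where "D1 = {p\<in>E. fst p \<in> S}"
  define D2 where "D2 = {p\<in>E. snd p \<in> S}"
  define D where "D = {p\<in>E. fst p \<in> S \<or> snd p \<in> S}"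
  have D1S: "D1 = Sigma S (\<lambda>x. {y. (x, y) \<in> E})" by (auto simp: D1_def)
  have D2S: "D2 = (\<lambda>y. (par y, y)) ` (S - {rt})"
  proof
    show "D2 \<subseteq> (\<lambda>y. (par y, y)) ` (S - {rt})"
    proof
      fix p assume p: "p \<in> D2"
      then obtain x y where "p = (x, y)" "(x, y) \<in> E" "y \<in> S" by (cases p) (auto simp: D2_def)
      moreover then have "y \<noteq> rt" using noroot by auto
      ultimately show "p \<in> (\<lambda>y. (par y, y)) ` (S - {rt})" using par_eq by force
    qed
    show "(\<lambda>y. (par y, y)) ` (S - {rt}) \<subseteq> D2" using par_in by (auto simp: D2_def)
  qed
  have fD1: "finite D1" unfolding D1S using S finch by auto
  have fD2: "finite D2" unfolding D2S using S by auto
  have DU: "D = D1 \<union> D2" by (auto simp: D_def D1_def D2_def)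
  have fD: "finite D" using fD1 fD2 DU by auto
  then show "finite {p\<in>E. fst p \<in> S \<or> snd p \<in> S}" by (simp add: D_def)
  have out: "y \<noteq> rt \<Longrightarrow> out_rate E r y = r (par y) y" for y
    using flow par_in unfolding flow_rule_def by fastforce
  have outrt: "out_rate E r rt = q" using flow unfolding flow_rule_def by simp
  have s2: "(\<Sum>p\<in>D. r (fst p) (snd p) * P (snd p)) = (\<Sum>p\<in>D2. r (fst p) (snd p) * P (snd p))"
  proof -
    have sub: "D2 \<subseteq> D" by (auto simp: DU)
    have z: "\<forall>p\<in>D - D2. r (fst p) (snd p) * P (snd p) = 0"
    proof
      fix p assume "p \<in> D - D2"
      then have "snd p \<notin> S" by (auto simp: D_def D2_def)
      then show "r (fst p) (snd p) * P (snd p) = 0" by (simp add: P0)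
    qed
    show ?thesis by (rule sum.mono_neutral_right[OF fD sub z])
  qed
  have s1: "(\<Sum>p\<in>D. r (fst p) (snd p) * P (fst p)) = (\<Sum>p\<in>D1. r (fst p) (snd p) * P (fst p))"
  proof -
    have sub: "D1 \<subseteq> D" by (auto simp: DU)
    have z: "\<forall>p\<in>D - D1. r (fst p) (snd p) * P (fst p) = 0"
    proof
      fix p assume "p \<in> D - D1"
      then have "fst p \<notin> S" by (auto simp: D_def D1_def)
      then show "r (fst p) (snd p) * P (fst p) = 0" by (simp add: P0)
    qed
    show ?thesis by (rule sum.mono_neutral_right[OF fD sub z])
  qed
  have s2': "(\<Sum>p\<in>D2. r (fst p) (snd p) * P (snd p)) = (\<Sum>y\<in>S - {rt}. out_rate E r y * P y)"
    unfolding D2S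
  proof (subst sum.reindex)
    show "inj_on (\<lambda>y. (par y, y)) (S - {rt})" by (auto simp: inj_on_def)
  qed (auto simp: out intro!: sum.cong)
  have s1': "(\<Sum>p\<in>D1. r (fst p) (snd p) * P (fst p)) = (\<Sum>x\<in>S. out_rate E r x * P x)"
  proof -
    have "(\<Sum>p\<in>D1. r (fst p) (snd p) * P (fst p)) = (\<Sum>(x, y)\<in>Sigma S (\<lambda>x. {y. (x, y) \<in> E}). r x y * P x)"
      unfolding D1S by (simp add: case_prod_beta')
    also have "\<dots> = (\<Sum>x\<in>S. \<Sum>y\<in>{y. (x, y) \<in> E}. r x y * P x)"
      by (rule sum.Sigma[symmetric]) (use S finch in auto)
    also have "\<dots> = (\<Sum>x\<in>S. out_rate E r x * P x)"
      by (simp add: out_rate_def sum_distrib_right)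
    finally show ?thesis .
  qed
  have "(\<Sum>p\<in>D. r (fst p) (snd p) * (P (snd p) - P (fst p)))
     = (\<Sum>y\<in>S - {rt}. out_rate E r y * P y) - (\<Sum>x\<in>S. out_rate E r x * P x)"
    by (simp add: right_diff_distrib sum_subtractf s1 s2 s1' s2')
  also have "\<dots> = - q * P rt"
  proof (cases "rt \<in> S")
    case True
    then show ?thesis using S by (simp add: sum.remove[of S rt] outrt)
  next
    case False
    then show ?thesis by (simp add: P0)
  qed
  finally show "(\<Sum>p\<in>{p\<in>E. fst p \<in> S \<or> snd p \<in> S}. r (fst p) (snd p) * (P (snd p) - P (fst p))) = - q * P rt"
    by (simp add: D_def)
qed


lemma root_term:
  fixes S :: "'v set"
  assumes S: "finite S" and f: "dep S f" and rho: "0 \<le> \<rho>" "\<rho> \<le> 1"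
  shows "integral\<^sup>L (bernoulli_product \<rho>) (\<lambda>\<eta>. lam * (1 - of_bool (\<eta> rt)) * (f (flip_conf \<eta> rt) - f \<eta>))
    = lam * (integral\<^sup>L (bernoulli_product \<rho>) (\<lambda>\<eta>. f (\<eta>(rt := True))) - integral\<^sup>L (bernoulli_product \<rho>) f)"
proof -
  let ?\<nu> = "bernoulli_product \<rho>"
  let ?g = "\<lambda>\<eta>. lam * (1 - of_bool (\<eta> rt)) * (f (flip_conf \<eta> rt) - f \<eta>)"
  have dg: "dep (insert rt S) ?g"
  proof (unfold dep_def, intro allI impI)
    fix \<eta> \<zeta> :: "'v \<Rightarrow> bool" assume h: "\<forall>v\<in>insert rt S. \<eta> v = \<zeta> v"
    have "\<forall>v\<in>S. flip_conf \<eta> rt v = flip_conf \<zeta> rt v" using h by (auto simp: flip_conf_def)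
    then have "f (flip_conf \<eta> rt) = f (flip_conf \<zeta> rt)" using f unfolding dep_def by blast
    moreover have "f \<eta> = f \<zeta>" using f h unfolding dep_def by blast
    ultimately show "?g \<eta> = ?g \<zeta>" using h by simp
  qed
  have "integral\<^sup>L ?\<nu> ?g = \<rho> * integral\<^sup>L ?\<nu> (\<lambda>\<eta>. ?g (\<eta>(rt := True))) + (1 - \<rho>) * integral\<^sup>L ?\<nu> (\<lambda>\<eta>. ?g (\<eta>(rt := False)))"
    by (rule split_L[OF _ dg rho]) (use S in simp)
  also have "(\<lambda>\<eta>. ?g (\<eta>(rt := True))) = (\<lambda>_. 0)" by simp
  also have "(\<lambda>\<eta>. ?g (\<eta>(rt := False))) = (\<lambda>\<eta>. lam * (f (\<eta>(rt := True)) - f (\<eta>(rt := False))))"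
    by (simp add: flip_conf_def)
  finally have 1: "integral\<^sup>L ?\<nu> ?g = (1 - \<rho>) * lam * (integral\<^sup>L ?\<nu> (\<lambda>\<eta>. f (\<eta>(rt := True))) - integral\<^sup>L ?\<nu> (\<lambda>\<eta>. f (\<eta>(rt := False))))"
    using dep_integrable[OF S dep_upd[OF f, of rt True], of \<rho>] dep_integrable[OF S dep_upd[OF f, of rt False], of \<rho>]
    by (simp add: Bochner_Integration.integral_diff)
  have 2: "integral\<^sup>L ?\<nu> f = \<rho> * integral\<^sup>L ?\<nu> (\<lambda>\<eta>. f (\<eta>(rt := True))) + (1 - \<rho>) * integral\<^sup>L ?\<nu> (\<lambda>\<eta>. f (\<eta>(rt := False)))"
    by (rule split_L[OF S f rho])
  show ?thesis unfolding 1 2 by (simp add: algebra_simps)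
qed

lemma edge_term:
  fixes S :: "'v set"
  assumes S: "finite S" and f: "dep S f" and rho: "0 \<le> \<rho>" "\<rho> \<le> 1"
  shows "integral\<^sup>L (bernoulli_product \<rho>) (\<lambda>\<eta>. c * of_bool (\<eta> x) * (1 - of_bool (\<eta> y)) * (f (swap_conf \<eta> x y) - f \<eta>))
    = \<rho> * c * (integral\<^sup>L (bernoulli_product \<rho>) (\<lambda>\<eta>. f (\<eta>(y := True))) - integral\<^sup>L (bernoulli_product \<rho>) (\<lambda>\<eta>. f (\<eta>(x := True))))"
proof (cases "x = y")
  case True
  have "swap_conf \<eta> x x = \<eta>" for \<eta> by (simp add: swap_conf_def)
  then show ?thesis using True by simp
next
  case xy: False
  let ?\<nu> = "bernoulli_product \<rho>"
  let ?g = "\<lambda>\<eta>. c * of_bool (\<eta> x) * (1 - of_bool (\<eta> y)) * (f (swap_conf \<eta> x y) - f \<eta>)"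
  have S2: "finite (insert x (insert y S))" using S by simp
  have dg: "dep (insert x (insert y S)) ?g"
  proof (unfold dep_def, intro allI impI)
    fix \<eta> \<zeta> :: "'v \<Rightarrow> bool" assume h: "\<forall>v\<in>insert x (insert y S). \<eta> v = \<zeta> v"
    have "\<forall>v\<in>S. swap_conf \<eta> x y v = swap_conf \<zeta> x y v" using h by (auto simp: swap_conf_def)
    then have "f (swap_conf \<eta> x y) = f (swap_conf \<zeta> x y)" using f unfolding dep_def by blast
    moreover have "f \<eta> = f \<zeta>" using f h unfolding dep_def by blast
    ultimately show "?g \<eta> = ?g \<zeta>" using h by simp
  qed
  have dg': "dep (insert x (insert y S)) (\<lambda>\<eta>. ?g (\<eta>(x := True)))" by (rule dep_upd[OF dg])
  have intf: "integrable ?\<nu> (\<lambda>\<eta>. f ((\<eta>(a := b))(a' := b')))" for a b a' b'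
    by (rule dep_integrable[OF S dep_upd[OF dep_upd[OF f]]])
  define A where "A = integral\<^sup>L ?\<nu> (\<lambda>\<eta>. f (\<eta>(x := False, y := True)))"
  define B where "B = integral\<^sup>L ?\<nu> (\<lambda>\<eta>. f (\<eta>(x := True, y := False)))"
  define C where "C = integral\<^sup>L ?\<nu> (\<lambda>\<eta>. f (\<eta>(x := True, y := True)))"
  have "integral\<^sup>L ?\<nu> ?g = \<rho> * integral\<^sup>L ?\<nu> (\<lambda>\<eta>. ?g (\<eta>(x := True))) + (1 - \<rho>) * integral\<^sup>L ?\<nu> (\<lambda>\<eta>. ?g (\<eta>(x := False)))"
    by (rule split_L[OF S2 dg rho])
  also have "(\<lambda>\<eta>. ?g (\<eta>(x := False))) = (\<lambda>_. 0)" by simp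
  also have "integral\<^sup>L ?\<nu> (\<lambda>\<eta>. ?g (\<eta>(x := True))) =
     \<rho> * integral\<^sup>L ?\<nu> (\<lambda>\<eta>. ?g (\<eta>(y := True, x := True))) + (1 - \<rho>) * integral\<^sup>L ?\<nu> (\<lambda>\<eta>. ?g (\<eta>(y := False, x := True)))"
    by (rule split_L[OF S2 dg' rho])
  also have "(\<lambda>\<eta>. ?g (\<eta>(y := True, x := True))) = (\<lambda>_. 0)" using xy by simp
  also have "(\<lambda>\<eta>. ?g (\<eta>(y := False, x := True))) = (\<lambda>\<eta>. c * (f (\<eta>(x := False, y := True)) - f (\<eta>(x := True, y := False))))"
  proof -
    have "swap_conf (\<eta>(y := False, x := True)) x y = \<eta>(x := False, y := True)" for \<eta>
      using xy by (auto simp: swap_conf_def fun_eq_iff)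
    moreover have "\<eta>(y := False, x := True) = \<eta>(x := True, y := False)" for \<eta>
      using xy by (simp add: fun_upd_twist)
    ultimately show ?thesis using xy by simp
  qed
  also have "integral\<^sup>L ?\<nu> (\<lambda>\<eta>. c * (f (\<eta>(x := False, y := True)) - f (\<eta>(x := True, y := False)))) = c * (A - B)"
    unfolding A_def B_def using intf by (simp add: Bochner_Integration.integral_diff)
  finally have 1: "integral\<^sup>L ?\<nu> ?g = \<rho> * (1 - \<rho>) * c * (A - B)" by simp
  have 2: "integral\<^sup>L ?\<nu> (\<lambda>\<eta>. f (\<eta>(y := True))) = \<rho> * C + (1 - \<rho>) * A"
    using split_L[OF S dep_upd[OF f, of y True] rho, of x] unfolding A_def C_def by simp
  have "integral\<^sup>L ?\<nu> (\<lambda>\<eta>. f (\<eta>(x := True))) = \<rho> * integral\<^sup>L ?\<nu> (\<lambda>\<eta>. f (\<eta>(x := True, y := True))) + (1 - \<rho>) * integral\<^sup>L ?\<nu> (\<lambda>\<eta>. f (\<eta>(x := True, y := False)))"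
    using split_L[OF S dep_upd[OF f, of x True] rho, of y] xy by (simp add: fun_upd_twist)
  then have 3: "integral\<^sup>L ?\<nu> (\<lambda>\<eta>. f (\<eta>(x := True))) = \<rho> * C + (1 - \<rho>) * B"
    unfolding B_def C_def .
  show ?thesis unfolding 1 2 3 by (simp add: algebra_simps)
qed

lemma dep_root: fixes S :: "'v set" shows "dep S f \<Longrightarrow> dep (insert rt S) (\<lambda>\<eta>. lam * (1 - of_bool (\<eta> rt)) * (f (flip_conf \<eta> rt) - f \<eta>))"
proof (unfold dep_def, intro allI impI)
  fix \<eta> \<zeta> :: "'v \<Rightarrow> bool" assume f: "\<forall>\<eta> \<zeta>. (\<forall>x\<in>S. \<eta> x = \<zeta> x) \<longrightarrow> f \<eta> = f \<zeta>"
    and h: "\<forall>v\<in>insert rt S. \<eta> v = \<zeta> v"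
  have "\<forall>v\<in>S. flip_conf \<eta> rt v = flip_conf \<zeta> rt v" using h by (auto simp: flip_conf_def)
  then have "f (flip_conf \<eta> rt) = f (flip_conf \<zeta> rt)" using f by blast
  moreover have "f \<eta> = f \<zeta>" using f h by blast
  ultimately show "lam * (1 - of_bool (\<eta> rt)) * (f (flip_conf \<eta> rt) - f \<eta>) =
     lam * (1 - of_bool (\<zeta> rt)) * (f (flip_conf \<zeta> rt) - f \<zeta>)" using h by simp
qed

lemma dep_edge: fixes S :: "'v set" shows "dep S f \<Longrightarrow> dep (insert x (insert y S)) (\<lambda>\<eta>. c * of_bool (\<eta> x) * (1 - of_bool (\<eta> y)) * (f (swap_conf \<eta> x y) - f \<eta>))"
proof (unfold dep_def, intro allI impI)
  fix \<eta> \<zeta> :: "'v \<Rightarrow> bool" assume f: "\<forall>\<eta> \<zeta>. (\<forall>x\<in>S. \<eta> x = \<zeta> x) \<longrightarrow> f \<eta> = f \<zeta>"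
    and h: "\<forall>v\<in>insert x (insert y S). \<eta> v = \<zeta> v"
  have "\<forall>v\<in>S. swap_conf \<eta> x y v = swap_conf \<zeta> x y v" using h by (auto simp: swap_conf_def)
  then have "f (swap_conf \<eta> x y) = f (swap_conf \<zeta> x y)" using f by blast
  moreover have "f \<eta> = f \<zeta>" using f h by blast
  ultimately show "c * of_bool (\<eta> x) * (1 - of_bool (\<eta> y)) * (f (swap_conf \<eta> x y) - f \<eta>) =
     c * of_bool (\<zeta> x) * (1 - of_bool (\<zeta> y)) * (f (swap_conf \<zeta> x y) - f \<zeta>)" using h by simp
qed

theorem mainTheorem4:
  fixes E :: "('v \<times> 'v) set" and rt :: 'v
    and r :: "'v \<Rightarrow> 'v \<Rightarrow> real" and q \<rho> lam :: real
    and f :: "('v \<Rightarrow> bool) \<Rightarrow> real"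
  assumes tree: "locally_finite_rooted_tree E rt"
    and rates_pos: "\<forall>(x, y)\<in>E. r x y > 0"
    and rates_bdd: "\<exists>C. \<forall>(x, y)\<in>E. r x y \<le> C"
    and flow: "flow_rule E rt r q"
    and q_pos: "q > 0"
    and rho: "0 < \<rho>" "\<rho> < 1"
    and lam: "lam = \<rho> * q"
    and cyl: "cylinder_fun f"
  shows "integral\<^sup>L (bernoulli_product \<rho>) (tasep_gen E rt r lam f) = 0"
proof -
  let ?\<nu> = "bernoulli_product \<rho>"
  obtain S where S: "finite S" and f: "dep S f"
    using cyl unfolding cylinder_fun_def dep_def by blast
  have rho': "0 \<le> \<rho>" "\<rho> \<le> 1" using rho by auto
  define P where "P v = integral\<^sup>L ?\<nu> (\<lambda>\<eta>. f (\<eta>(v := True))) - integral\<^sup>L ?\<nu> f" for v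
  have P0: "P v = 0" if "v \<notin> S" for v
  proof -
    have "(\<lambda>\<eta>. f (\<eta>(v := True))) = f" using f that unfolding dep_def by (auto simp: fun_eq_iff)
    then show ?thesis by (simp add: P_def)
  qed
  define D where "D = {p\<in>E. fst p \<in> S \<or> snd p \<in> S}"
  have fD: "finite D" unfolding D_def by (rule comb(1)[OF tree flow S P0])
  have comb2: "(\<Sum>p\<in>D. r (fst p) (snd p) * (P (snd p) - P (fst p))) = - q * P rt"
    unfolding D_def by (rule comb(2)[OF tree flow S P0])
  define T where "T p \<eta> = r (fst p) (snd p) * of_bool (\<eta> (fst p)) * (1 - of_bool (\<eta> (snd p))) *
                      (f (swap_conf \<eta> (fst p) (snd p)) - f \<eta>)" for p \<eta>
  define R where "R \<eta> = lam * (1 - of_bool (\<eta> rt)) * (f (flip_conf \<eta> rt) - f \<eta>)" for \<eta>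
  have pw: "tasep_gen E rt r lam f \<eta> = R \<eta> + (\<Sum>p\<in>D. T p \<eta>)" for \<eta>
  proof -
    have "(\<Sum>\<^sub>\<infinity>(x, y)\<in>E. r x y * of_bool (\<eta> x) * (1 - of_bool (\<eta> y)) * (f (swap_conf \<eta> x y) - f \<eta>))
       = (\<Sum>\<^sub>\<infinity>p\<in>D. T p \<eta>)"
    proof (rule infsum_cong_neutral)
      fix p assume p: "p \<in> E - D"
      then have "fst p \<notin> S" "snd p \<notin> S" by (auto simp: D_def)
      then have "\<forall>v\<in>S. swap_conf \<eta> (fst p) (snd p) v = \<eta> v" by (auto simp: swap_conf_def)
      then have "f (swap_conf \<eta> (fst p) (snd p)) = f \<eta>" using f unfolding dep_def by blast
      then show "(case p of (x, y) \<Rightarrow> r x y * of_bool (\<eta> x) * (1 - of_bool (\<eta> y)) * (f (swap_conf \<eta> x y) - f \<eta>)) = 0"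
        by (simp add: case_prod_beta')
    qed (auto simp: D_def T_def case_prod_beta')
    then show ?thesis using fD by (simp add: tasep_gen_def R_def)
  qed
  have intR: "integrable ?\<nu> R" unfolding R_def
    by (rule dep_integrable[OF _ dep_root[OF f]]) (use S in simp)
  have intT: "integrable ?\<nu> (T p)" for p unfolding T_def
    by (rule dep_integrable[OF _ dep_edge[OF f]]) (use S in simp)
  have "integral\<^sup>L ?\<nu> (tasep_gen E rt r lam f) = integral\<^sup>L ?\<nu> (\<lambda>\<eta>. R \<eta> + (\<Sum>p\<in>D. T p \<eta>))"
  proof -
    have "tasep_gen E rt r lam f = (\<lambda>\<eta>. R \<eta> + (\<Sum>p\<in>D. T p \<eta>))" by (rule ext) (rule pw)
    then show ?thesis by (simp only:)
  qed
  also have "\<dots> = integral\<^sup>L ?\<nu> R + (\<Sum>p\<in>D. integral\<^sup>L ?\<nu> (T p))"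
    using intR intT by (simp add: Bochner_Integration.integral_add Bochner_Integration.integral_sum)
  also have "integral\<^sup>L ?\<nu> R = lam * P rt"
    unfolding R_def P_def by (rule root_term[OF S f rho'])
  also have "(\<Sum>p\<in>D. integral\<^sup>L ?\<nu> (T p)) = (\<Sum>p\<in>D. \<rho> * (r (fst p) (snd p) * (P (snd p) - P (fst p))))"
  proof (rule sum.cong[OF refl])
    fix p
    show "integral\<^sup>L ?\<nu> (T p) = \<rho> * (r (fst p) (snd p) * (P (snd p) - P (fst p)))"
      unfolding T_def P_def by (subst edge_term[OF S f rho']) (simp add: algebra_simps)
  qed
  also have "\<dots> = \<rho> * (- q * P rt)" by (simp add: sum_distrib_left[symmetric] comb2)
  finally show ?thesis by (simp add: lam)
qed

end
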